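(* Let $n,m,l,N\in\mathbb{N}_{>0}$ and let $\mathcal{M}=\{A_1,\dots,A_m\}\subset\mathbb{R}^{n\times n}$. Let $\omega_N=\{(x_{i},j_{i,1},\dots,j_{i,l}) : 1\le i\le N\}\subset \mathbb{S}\times\{1,\dots,m\}^l$ be a sample (drawn uniformly), and for $\mathbf{j}=(j_1,\dots,j_l)$ write $\mathbf{A_j}:=A_{j_l}A_{j_{l-1}}\cdots A_{j_1}$. Let $\gamma^*(\omega_N)$ be the optimal value of the optimization problem $$\min_{\gamma,P}\ \gamma\quad\text{s.t.}\quad (\mathbf{A_j}x)^TP\,\mathbf{A_j}x\le \gamma^{2l}x^TPx\ \ \forall (x,\mathbf{j})\in\omega_N,\qquad P\succ 0,\ \gamma\ge 0,$$ over $\gamma\in\mathbb{R}$ and symmetric $P\in\mathbb{R}^{n\times n}$. Then $$\rho(\mathcal{M})\ \ge\ \frac{\gamma^*(\omega_N)}{\sqrt[2l]{n}}.$$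
   Context: $\mathbb{S}$ denotes the Euclidean unit sphere in $\mathbb{R}^n$. For a finite set $\mathcal{M}\subset\mathbb{R}^{n\times n}$, the joint spectral radius is $\rho(\mathcal{M})=\lim_{k\to\infty}\max\{\|A_{i_1}\cdots A_{i_k}\|^{1/k}: A_{i_j}\in\mathcal{M}\}$. Note the optimization problem only requires the pairs $(x,\mathbf{A_j}x)$, i.e. observed trajectories of length $l$ of the switched system $x_{k+1}=A_{\tau(k)}x_k$. *)

theory Defs
  imports "HOL-Analysis.Analysis"
begin

text \<open>Product of a switching sequence: mat_seq_prod A js k = A (js (k-1)) ** ... ** A (js 0)
  (so for a word j = (j_1,...,j_l), stored as js 0 = j_1, ..., js (l-1) = j_l,
  this is A_{j_l} ... A_{j_1}).\<close>
fun mat_seq_prod :: "(nat \<Rightarrow> real^'n^'n) \<Rightarrow> (nat \<Rightarrow> nat) \<Rightarrow> nat \<Rightarrow> real^'n^'n" where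
  "mat_seq_prod A js 0 = mat 1"
| "mat_seq_prod A js (Suc k) = A (js k) ** mat_seq_prod A js k"

definition mat_opnorm :: "real^'n^'n \<Rightarrow> real" where
  "mat_opnorm B = onorm (\<lambda>x. B *v x)"

definition jsr :: "(nat \<Rightarrow> real^'n^'n) \<Rightarrow> nat \<Rightarrow> real" where
  "jsr A m = lim (\<lambda>k. Max {root k (mat_opnorm (mat_seq_prod A js k)) | js.
                              \<forall>i<k. js i \<in> {1..m}})"

definition sym_mat :: "real^'n^'n \<Rightarrow> bool" where
  "sym_mat P \<longleftrightarrow> transpose P = P"

definition pos_def_mat :: "real^'n^'n \<Rightarrow> bool" where
  "pos_def_mat P \<longleftrightarrow> sym_mat P \<and> (\<forall>v. v \<noteq> 0 \<longrightarrow> v \<bullet> (P *v v) > 0)"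

text \<open>Feasibility of (gamma, P) for the sample given by x (points) and J (index words),
  sample index i ranging over 1..N, word positions 0..l-1.\<close>
definition feasible ::
  "(nat \<Rightarrow> real^'n^'n) \<Rightarrow> nat \<Rightarrow> nat \<Rightarrow> (nat \<Rightarrow> real^'n) \<Rightarrow> (nat \<Rightarrow> nat \<Rightarrow> nat)
    \<Rightarrow> real \<Rightarrow> real^'n^'n \<Rightarrow> bool" where
  "feasible A l N x J \<gamma> P \<longleftrightarrow>
     \<gamma> \<ge> 0 \<and> pos_def_mat P \<and>
     (\<forall>i\<in>{1..N}. let y = mat_seq_prod A (J i) l *v x i in
        y \<bullet> (P *v y) \<le> \<gamma> ^ (2*l) * (x i \<bullet> (P *v x i)))"

definition opt_value ::
  "(nat \<Rightarrow> real^'n^'n) \<Rightarrow> nat \<Rightarrow> nat \<Rightarrow> (nat \<Rightarrow> real^'n) \<Rightarrow> (nat \<Rightarrow> nat \<Rightarrow> nat) \<Rightarrow> real" where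
  "opt_value A l N x J = Inf {\<gamma>. \<exists>P. feasible A l N x J \<gamma> P}"

end

theory Submission
  imports Defs
begin

lemma det_cont: "continuous_on S (det :: real^'n^'n \<Rightarrow> real)"
  unfolding det_def[abs_def] by (intro continuous_intros)

lemma msp_split: "mat_seq_prod A js (k + j) = mat_seq_prod A (\<lambda>i. js (i + k)) j ** mat_seq_prod A js k"
  by (induction j) (auto simp: matrix_mul_assoc add.commute)

lemma opn_bound: "norm (T *v x) \<le> mat_opnorm T * norm x"
  unfolding mat_opnorm_def by (rule onorm) simp

lemma opn_nonneg: "0 \<le> mat_opnorm T"
  unfolding mat_opnorm_def by (rule onorm_pos_le) simp

lemma opn_mul: "mat_opnorm (X ** Y) \<le> mat_opnorm X * mat_opnorm Y"
proof -
  have "(\<lambda>x. (X ** Y) *v x) = (\<lambda>x. X *v x) \<circ> (\<lambda>x. Y *v x)"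
    by (auto simp: matrix_vector_mul_assoc)
  then show ?thesis unfolding mat_opnorm_def by (metis onorm_compose matrix_vector_mul_bounded_linear)
qed

lemma fekete_bound:
  fixes a :: "nat \<Rightarrow> real"
  assumes nn: "\<And>k. 0 \<le> a k" and sub: "\<And>j k. a (j + k) \<le> a j * a k"
    and u: "Inf ((\<lambda>k. root k (a k)) ` {1..}) < u"
  shows "\<exists>B>0. \<forall>k. a k \<le> B * u^k"
proof -
  let ?S = "(\<lambda>k. root k (a k)) ` {1..}"
  have "?S \<noteq> {}" by auto
  then obtain p where p: "p \<ge> 1" "root p (a p) < u" using cInf_lessD[OF _ u] by auto
  have u0: "0 < u" using p real_root_ge_zero[of "a p" p] nn[of p] by linarith
  have ap: "a p \<le> u ^ p"
  proof -
    have "a p = root p (a p) ^ p" using p nn by simp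
    also have "\<dots> \<le> u ^ p" using p by (intro power_mono) (auto simp: real_root_ge_zero nn)
    finally show ?thesis .
  qed
  have qr: "a (q * p + r) \<le> (a p) ^ q * a r" for q r
  proof (induction q)
    case 0 then show ?case by simp
  next
    case (Suc q)
    have "a (Suc q * p + r) = a (p + (q * p + r))" by (simp add: algebra_simps)
    also have "\<dots> \<le> a p * a (q * p + r)" by (rule sub)
    also have "\<dots> \<le> a p * ((a p) ^ q * a r)" using Suc nn by (simp add: mult_left_mono)
    finally show ?case by (simp add: mult.assoc)
  qed
  define B where "B = max 1 (Max ((\<lambda>r. a r / u ^ r) ` {..<p}))"
  have B0: "B > 0" unfolding B_def by simp
  have "a k \<le> B * u ^ k" for k
  proof -
    define q r where "q = k div p" and "r = k mod p"
    have k: "k = q * p + r" unfolding q_def r_def by simp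
    have rp: "r < p" unfolding r_def using p by simp
    have "a k \<le> (a p) ^ q * a r" using qr k by simp
    also have "\<dots> \<le> (u ^ p) ^ q * a r" using ap nn by (intro mult_right_mono power_mono) auto
    also have "\<dots> = u ^ k * (a r / u ^ r)" using u0 k by (simp add: power_add power_mult field_simps mult.commute)
    also have "\<dots> \<le> u ^ k * B"
    proof -
      have "a r / u ^ r \<le> Max ((\<lambda>r. a r / u ^ r) ` {..<p})" using rp by (intro Max_ge) auto
      then show ?thesis unfolding B_def using u0 by (intro mult_left_mono) auto
    qed
    finally show ?thesis by (simp add: mult.commute)
  qed
  with B0 show ?thesis by blast
qed

lemma fekete_conv:
  fixes a :: "nat \<Rightarrow> real"
  assumes nn: "\<And>k. 0 \<le> a k" and sub: "\<And>j k. a (j + k) \<le> a j * a k"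
  shows "(\<lambda>k. root k (a k)) \<longlonglongrightarrow> Inf ((\<lambda>k. root k (a k)) ` {1..})"
proof -
  let ?S = "(\<lambda>k. root k (a k)) ` {1..}"
  define L where "L = Inf ?S"
  have bdd: "bdd_below ?S" by (rule bdd_belowI[of _ 0]) (auto simp: real_root_ge_zero nn)
  have L0: "0 \<le> L" unfolding L_def by (rule cInf_greatest) (auto simp: real_root_ge_zero nn)
  show ?thesis unfolding L_def[symmetric]
  proof (rule LIMSEQ_I)
    fix r :: real assume r: "0 < r"
    define u where "u = L + r/2"
    have u0: "0 < u" "L < u" using L0 r unfolding u_def by auto
    obtain B where B: "B > 0" "\<And>k. a k \<le> B * u ^ k" using fekete_bound[OF nn sub] u0 unfolding L_def by blast
    have c1: "1 < (L + r) / u" using u0 r unfolding u_def by (simp add: field_simps)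
    have "eventually (\<lambda>n. root n B < (L + r) / u) sequentially"
      using order_tendstoD(2)[OF LIMSEQ_root_const[OF B(1)] c1] .
    then obtain N where N: "\<And>n. n \<ge> N \<Longrightarrow> root n B < (L + r) / u" by (auto simp: eventually_sequentially)
    show "\<exists>no. \<forall>n\<ge>no. norm (root n (a n) - L) < r"
    proof (intro exI allI impI)
      fix n assume n: "n \<ge> max N 1"
      have lo: "L \<le> root n (a n)" unfolding L_def using n by (intro cInf_lower bdd) auto
      have "root n (a n) \<le> root n (B * u ^ n)" using n B by (intro real_root_le_mono) auto
      also have "\<dots> = root n B * u" using n u0 by (simp add: real_root_mult real_root_power)
      also have "\<dots> < (L + r) / u * u" using N[of n] n u0 by (intro mult_strict_right_mono) auto
      also have "\<dots> = L + r" using u0 by simp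
      finally show "norm (root n (a n) - L) < r" using lo by simp
    qed
  qed
qed


definition PS :: "(nat \<Rightarrow> real^'n^'n) \<Rightarrow> nat \<Rightarrow> nat \<Rightarrow> (real^'n^'n) set" where
  "PS A m k = {mat_seq_prod A js k | js. \<forall>i<k. js i \<in> {1..m}}"

lemma PS_finite: "finite (PS A m k)"
proof (induction k)
  case 0
  have "PS A m 0 \<subseteq> {mat 1}" unfolding PS_def by auto
  then show ?case by (rule finite_subset) simp
next
  case (Suc k)
  have "PS A m (Suc k) \<subseteq> (\<lambda>(a, T). A a ** T) ` ({1..m} \<times> PS A m k)"
  proof
    fix T assume "T \<in> PS A m (Suc k)"
    then obtain js where js: "\<forall>i<Suc k. js i \<in> {1..m}" "T = mat_seq_prod A js (Suc k)" unfolding PS_def by auto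
    then have "(js k, mat_seq_prod A js k) \<in> {1..m} \<times> PS A m k" unfolding PS_def by auto
    moreover have "T = (\<lambda>(a, T). A a ** T) (js k, mat_seq_prod A js k)" using js by simp
    ultimately show "T \<in> (\<lambda>(a, T). A a ** T) ` ({1..m} \<times> PS A m k)" by blast
  qed
  then show ?case by (rule finite_subset) (use Suc in auto)
qed

lemma PS_ne: "m > 0 \<Longrightarrow> PS A m k \<noteq> {}"
proof -
  assume "m > 0"
  then have "mat_seq_prod A (\<lambda>_. 1) k \<in> PS A m k" unfolding PS_def by auto
  then show ?thesis by blast
qed

definition amax :: "(nat \<Rightarrow> real^'n^'n) \<Rightarrow> nat \<Rightarrow> nat \<Rightarrow> real" where
  "amax A m k = Max (mat_opnorm ` PS A m k)"

lemma amax_ge: "\<forall>i<k. js i \<in> {1..m} \<Longrightarrow> mat_opnorm (mat_seq_prod A js k) \<le> amax A m k"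
proof -
  assume "\<forall>i<k. js i \<in> {1..m}"
  then have "mat_seq_prod A js k \<in> PS A m k" unfolding PS_def by auto
  then show ?thesis unfolding amax_def by (intro Max_ge) (auto simp: PS_finite)
qed

lemma amax_nn: "m > 0 \<Longrightarrow> 0 \<le> amax A m k"
proof -
  assume "m > 0"
  then obtain T where "T \<in> PS A m k" using PS_ne by blast
  then have "mat_opnorm T \<le> amax A m k" unfolding amax_def by (intro Max_ge) (auto simp: PS_finite)
  then show ?thesis using opn_nonneg[of T] by linarith
qed

lemma amax_sub: assumes "m > 0" shows "amax A m (j + k) \<le> amax A m j * amax A m k"
proof -
  have "amax A m (k + j) \<in> mat_opnorm ` PS A m (k + j)" unfolding amax_def
    by (rule Max_in) (auto simp: PS_finite PS_ne[OF assms])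
  then obtain T where T: "T \<in> PS A m (k + j)" "amax A m (j + k) = mat_opnorm T"
    by (auto simp: add.commute)
  then obtain js where js: "\<forall>i<k+j. js i \<in> {1..m}" "T = mat_seq_prod A js (k + j)" unfolding PS_def by auto
  have "mat_opnorm T \<le> mat_opnorm (mat_seq_prod A (\<lambda>i. js (i + k)) j) * mat_opnorm (mat_seq_prod A js k)"
    unfolding js msp_split by (rule opn_mul)
  also have "\<dots> \<le> amax A m j * amax A m k"
    using js(1) by (intro mult_mono amax_ge amax_nn assms opn_nonneg) auto
  finally show ?thesis using T by simp
qed

lemma jsr_eq: assumes "m > 0"
  shows "jsr A m = lim (\<lambda>k. root k (amax A m k))"
proof -
  have "Max {root k (mat_opnorm (mat_seq_prod A js k)) | js. \<forall>i<k. js i \<in> {1..m}} = root k (amax A m k)" for k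
  proof -
    have mono: "mono (root k)" by (cases "k = 0") (auto simp: mono_def intro: real_root_le_mono)
    have "{root k (mat_opnorm (mat_seq_prod A js k)) | js. \<forall>i<k. js i \<in> {1..m}} = root k ` (mat_opnorm ` PS A m k)"
      unfolding PS_def by auto
    moreover have "root k (Max (mat_opnorm ` PS A m k)) = Max (root k ` mat_opnorm ` PS A m k)"
      by (rule mono_Max_commute[OF mono]) (auto simp: PS_finite PS_ne[OF assms])
    ultimately show ?thesis unfolding amax_def by simp
  qed
  then show ?thesis unfolding jsr_def by simp
qed

lemma jsr_bound:
  assumes m: "m > 0" and r: "jsr A m < r"
  shows "\<exists>B>0. \<forall>k js. (\<forall>i<k. js i \<in> {1..m}) \<longrightarrow> mat_opnorm (mat_seq_prod A js k) \<le> B * r ^ k"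
    and "0 < r"
proof -
  let ?a = "amax A m"
  have conv: "(\<lambda>k. root k (?a k)) \<longlonglongrightarrow> Inf ((\<lambda>k. root k (?a k)) ` {1..})"
    by (rule fekete_conv) (auto intro: amax_nn amax_sub m)
  then have j: "jsr A m = Inf ((\<lambda>k. root k (?a k)) ` {1..})" unfolding jsr_eq[OF m] by (rule limI)
  have "0 \<le> Inf ((\<lambda>k. root k (?a k)) ` {1..})"
    by (rule cInf_greatest) (auto simp: real_root_ge_zero amax_nn m)
  then show "0 < r" using r j by simp
  obtain B where B: "B > 0" "\<And>k. ?a k \<le> B * r ^ k"
    using fekete_bound[of ?a r, OF amax_nn[OF m] amax_sub[OF m]] r j by auto
  then show "\<exists>B>0. \<forall>k js. (\<forall>i<k. js i \<in> {1..m}) \<longrightarrow> mat_opnorm (mat_seq_prod A js k) \<le> B * r ^ k"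
  proof (intro exI[of _ B] conjI allI impI)
    fix k :: nat and js :: "nat \<Rightarrow> nat" assume "\<forall>i<k. js i \<in> {1..m}"
    then have "mat_opnorm (mat_seq_prod A js k) \<le> ?a k" by (rule amax_ge)
    also have "\<dots> \<le> B * r ^ k" by (rule B(2))
    finally show "mat_opnorm (mat_seq_prod A js k) \<le> B * r ^ k" .
  qed (rule B(1))
qed

lemma dot_transpose: "(transpose N *v h) \<bullet> (y::real^'n) = h \<bullet> (N *v y)"
  by (simp add: dot_lmul_matrix)

lemma orth_norm: assumes "orthogonal_matrix R" shows "norm (transpose R *v u) = norm (u::real^'n)"
proof -
  have "(transpose R *v u) \<bullet> (transpose R *v u) = u \<bullet> (R *v (transpose R *v u))"
    by (rule dot_transpose)
  also have "\<dots> = u \<bullet> u" using assms unfolding orthogonal_matrix_def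
    by (simp only: matrix_vector_mul_assoc) simp
  finally have "(transpose R *v u) \<bullet> (transpose R *v u) = u \<bullet> u" .
  then show ?thesis by (metis norm_eq_sqrt_inner)
qed

lemma theta_ineq:
  fixes g2 :: real and n :: nat
  assumes "g2 > real n" "n \<ge> 1"
  shows "\<exists>\<theta>. 0 < \<theta> \<and> \<theta> < 1 \<and> (\<theta> + (1 - \<theta>) * g2) * \<theta> ^ (n - 1) > 1"
proof -
  define e where "e = (g2 - n) / (2 * (g2 - 1) * n)"
  have g1: "g2 > 1" using assms by linarith
  have e0: "e > 0" unfolding e_def using assms g1 by (simp add: field_simps)
  have e1: "e * (g2 - 1) \<le> (g2 - n) / (2 * n)" unfolding e_def using g1 assms by (simp add: field_simps)
  have n1: "real n \<ge> 1" using assms by simp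
  have "2 * real n * (g2 - 1) \<ge> 2 * (g2 - 1)" using n1 g1 by (intro mult_right_mono) auto
  moreover have "g2 - n < 2 * (g2 - 1)" using n1 g1 by (simp add: algebra_simps)
  ultimately have "g2 - n < 2 * real n * (g2 - 1)" by linarith
  then have "(g2 - n) / (2 * n) < g2 - 1" using n1 by (simp add: field_simps)
  then have "e * (g2 - 1) < g2 - 1" using e1 by linarith
  then have e2: "e < 1" using g1 by simp
  have bern: "1 - real (n - 1) * e \<le> (1 - e) ^ (n - 1)"
    using Bernoulli_inequality[of "- e" "n - 1"] e2 by simp
  have "(1 + e * (g2 - 1)) * (1 - real (n - 1) * e) \<le> (1 + e * (g2 - 1)) * (1 - e) ^ (n - 1)"
    using bern e0 g1 by (intro mult_left_mono) auto
  moreover have "(1 + e * (g2 - 1)) * (1 - real (n - 1) * e) > 1"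
  proof -
    have "(1 + e * (g2 - 1)) * (1 - real (n - 1) * e) = 1 + e * ((g2 - n) - e * (g2 - 1) * (n - 1))"
      using assms by (simp add: algebra_simps of_nat_diff)
    moreover have "e * (g2 - 1) * (n - 1) < g2 - n"
    proof -
      have "e * (g2 - 1) * (n - 1) \<le> (g2 - n) / (2 * n) * (n - 1)" using e1 assms by (intro mult_right_mono) auto
      also have "\<dots> < g2 - n"
      proof -
        have q: "real (n - 1) / real (2 * n) < 1" using assms by (simp add: field_simps)
        have "(g2 - n) / (2 * n) * (n - 1) = (g2 - n) * (real (n - 1) / real (2 * n))" by simp
        also have "\<dots> < (g2 - n) * 1" using q assms by (intro mult_strict_left_mono) auto
        finally show ?thesis by simp
      qed
      finally show ?thesis .
    qed
    ultimately show ?thesis using e0 by (simp add: of_nat_diff assms)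
  qed
  ultimately have h1: "(1 + e * (g2 - 1)) * (1 - e) ^ (n - 1) > 1" by linarith
  have eq: "(1 - e) + (1 - (1 - e)) * g2 = 1 + e * (g2 - 1)" by (simp add: algebra_simps)
  have "((1 - e) + (1 - (1 - e)) * g2) * (1 - e) ^ (n - 1) > 1" unfolding eq by (rule h1)
  then show ?thesis using e0 e2 by (intro exI[of _ "1 - e"]) auto
qed


lemma norm_mat_bound:
  fixes M :: "real^'n^'n"
  assumes "\<And>i j. \<bar>M$i$j\<bar> \<le> b"
  shows "norm M \<le> real CARD('n) * (real CARD('n) * b)"
proof -
  have "norm M \<le> (\<Sum>i\<in>UNIV. norm (M$i))" unfolding norm_vec_def by (rule L2_set_le_sum) simp
  also have "\<dots> \<le> (\<Sum>i\<in>(UNIV::'n set). real CARD('n) * b)"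
  proof (rule sum_mono)
    fix i
    have "norm (M$i) \<le> (\<Sum>j\<in>UNIV. \<bar>M$i$j\<bar>)" by (rule norm_le_l1_cart)
    also have "\<dots> \<le> (\<Sum>j\<in>(UNIV::'n set). b)" using assms by (intro sum_mono) auto
    finally show "norm (M$i) \<le> real CARD('n) * b" by simp
  qed
  finally show ?thesis by simp
qed

lemma diag_norm2:
  fixes v :: "real^'n" and i0 :: 'n and d1 d2 :: real
  defines "D \<equiv> (\<chi> i j. if i = j then (if i = i0 then d1 else d2) else 0) :: real^'n^'n"
  shows "norm (D *v v) ^ 2 = d2^2 * norm v ^ 2 + (d1^2 - d2^2) * (v$i0)^2"
proof -
  have Dv: "(D *v v) $ i = (if i = i0 then d1 else d2) * v$i" for i
  proof -
    have "(D *v v) $ i = (\<Sum>j\<in>UNIV. if j = i then (if i = i0 then d1 else d2) * v$j else 0)"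
      unfolding matrix_vector_mult_def vec_lambda_beta by (rule sum.cong) (auto simp: D_def)
    also have "\<dots> = (if i = i0 then d1 else d2) * v$i" by simp
    finally show ?thesis .
  qed
  have "norm (D *v v) ^ 2 = (\<Sum>i\<in>UNIV. ((if i = i0 then d1 else d2) * v$i)^2)"
    unfolding power2_norm_eq_inner inner_vec_def Dv by (simp add: power2_eq_square)
  also have "\<dots> = (\<Sum>i\<in>UNIV. d2^2 * (v$i)^2 + (if i = i0 then (d1^2 - d2^2) * (v$i)^2 else 0))"
    by (intro sum.cong) (auto simp: power_mult_distrib algebra_simps)
  also have "\<dots> = d2^2 * (\<Sum>i\<in>UNIV. (v$i)^2) + (d1^2 - d2^2) * (v$i0)^2"
    by (simp add: sum.distrib sum_distrib_left)
  also have "(\<Sum>i\<in>UNIV. (v$i)^2) = norm v ^ 2"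
    unfolding power2_norm_eq_inner inner_vec_def by (simp add: power2_eq_square)
  finally show ?thesis .
qed

lemma diag_det:
  fixes i0 :: "'n::finite" and d1 d2 :: real
  defines "D \<equiv> (\<chi> i j. if i = j then (if i = i0 then d1 else d2) else 0) :: real^'n^'n"
  shows "det D = d1 * d2 ^ (CARD('n) - 1)"
proof -
  have "det D = (\<Prod>i\<in>UNIV. if i = i0 then d1 else d2)"
    unfolding D_def by (subst det_diagonal) auto
  also have "\<dots> = d1 * (\<Prod>i\<in>UNIV - {i0}. if i = i0 then d1 else d2)"
    by (subst prod.remove[of _ i0]) auto
  also have "(\<Prod>i\<in>UNIV - {i0}. if i = i0 then d1 else d2) = (\<Prod>i\<in>UNIV - {i0}. d2)"
    by (intro prod.cong) auto
  also have "\<dots> = d2 ^ (CARD('n) - 1)" by (simp add: card_Diff_singleton)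
  finally show ?thesis .
qed


lemma loewner:
  fixes K :: "(real^'n) set"
  assumes cK: "convex K" and clK: "closed K" and symK: "\<And>x. x \<in> K \<Longrightarrow> -x \<in> K"
    and c: "c > 0" and ballK: "cball 0 c \<subseteq> K" and Kb: "\<And>x. x \<in> K \<Longrightarrow> norm x \<le> 1"
  shows "\<exists>M :: real^'n^'n. invertible M \<and> (\<forall>x\<in>K. norm (M *v x) \<le> 1) \<and>
           (\<forall>z. sqrt (real CARD('n)) * norm (M *v z) \<le> 1 \<longrightarrow> z \<in> K)"
proof -
  define S where "S = {M :: real^'n^'n. \<forall>x\<in>K. norm (M *v x) \<le> 1}"
  have closedS: "closed S"
  proof -
    have "S = (\<Inter>x\<in>K. {M. norm (M *v x) \<le> 1})" unfolding S_def by auto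
    moreover have "closed {M :: real^'n^'n. norm (M *v x) \<le> 1}" for x
      unfolding matrix_vector_mult_def by (intro closed_Collect_le continuous_intros)
    ultimately show ?thesis by auto
  qed
  have boundedS: "bounded S"
  proof -
    have "norm M \<le> real CARD('n) * (real CARD('n) * (1 / c))" if "M \<in> S" for M
    proof (rule norm_mat_bound)
      fix i j
      have "c *\<^sub>R axis j 1 \<in> K" using ballK c by auto
      then have "norm (M *v (c *\<^sub>R axis j 1)) \<le> 1" using that unfolding S_def by auto
      moreover have "(M *v (c *\<^sub>R axis j 1)) $ i = c * M$i$j"
        by (simp add: matrix_vector_mult_scaleR matrix_vector_mult_basis column_def)
      ultimately have "\<bar>c * M$i$j\<bar> \<le> 1" using component_le_norm_cart[of "M *v (c *\<^sub>R axis j 1)" i] by simp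
      then show "\<bar>M$i$j\<bar> \<le> 1 / c" using c by (simp add: abs_mult field_simps)
    qed
    then show ?thesis unfolding bounded_iff by blast
  qed
  have compS: "compact S" using closedS boundedS by (simp add: compact_eq_bounded_closed)
  have IS: "mat 1 \<in> S" unfolding S_def using Kb by simp
  obtain M0 where M0: "M0 \<in> S" "\<And>M. M \<in> S \<Longrightarrow> \<bar>det M\<bar> \<le> \<bar>det M0\<bar>"
    using continuous_attains_sup[OF compS _ continuous_on_rabs[OF det_cont], of ] IS by blast
  have detM0: "\<bar>det M0\<bar> \<ge> 1" using M0(2)[OF IS] by simp
  have invM0: "invertible M0" using detM0 by (simp add: invertible_det_nz)
  then obtain N where N: "N ** M0 = mat 1" unfolding invertible_def by blast
  have claim: "z \<in> K" if z: "sqrt (real CARD('n)) * norm (M0 *v z) \<le> 1" for z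
  proof (rule ccontr)
    assume zK: "z \<notin> K"
    obtain a b where ab: "inner a z < b" "\<And>x. x \<in> K \<Longrightarrow> inner a x > b"
      using separating_hyperplane_closed_point[OF cK clK zK] by blast
    have "0 \<in> K" using ballK c by auto
    then have b0: "b < 0" using ab(2)[of 0] by simp
    define h where "h = (1 / (- b)) *\<^sub>R a"
    have hK: "\<bar>inner h x\<bar> < 1" if "x \<in> K" for x
    proof -
      have "inner a x > b" "inner a (-x) > b" using ab(2)[of x] ab(2)[of "-x"] that symK[OF that] by auto
      then have "\<bar>inner a x\<bar> < - b" by auto
      then show ?thesis unfolding h_def using b0 by (simp add: abs_mult field_simps)
    qed
    have hz: "\<bar>inner h z\<bar> > 1"
    proof -
      have "inner h z = inner a z / (- b)" unfolding h_def by simp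
      moreover have "inner a z / (- b) < -1" using ab(1) b0 by (simp add: field_simps)
      ultimately have "inner h z < -1" by simp
      then show ?thesis by (simp add: abs_if)
    qed
    define g where "g = transpose N *v h"
    have gM: "inner g (M0 *v y) = inner h y" for y
      unfolding g_def dot_transpose by (simp add: matrix_vector_mul_assoc N)
    define \<gamma> where "\<gamma> = norm g"
    have "1 < \<bar>inner g (M0 *v z)\<bar>" using hz gM by simp
    also have "\<dots> \<le> \<gamma> * norm (M0 *v z)" unfolding \<gamma>_def by (rule Cauchy_Schwarz_ineq2)
    finally have gz: "1 < \<gamma> * norm (M0 *v z)" .
    have Mz0: "norm (M0 *v z) > 0" using gz \<gamma>_def
      by (metis mult_zero_right norm_ge_zero not_less_iff_gr_or_eq zero_less_one order_le_less_trans less_eq_real_def)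
    have nsq: "sqrt (real CARD('n)) < \<gamma>"
    proof -
      have "sqrt (real CARD('n)) * norm (M0 *v z) < \<gamma> * norm (M0 *v z)" using z gz by linarith
      then show ?thesis using Mz0 by (simp add: mult_less_cancel_right)
    qed
    have g0: "\<gamma> > 0" using nsq by (smt (verit) real_sqrt_ge_zero of_nat_0_le_iff)
    have gsq: "\<gamma>^2 > real CARD('n)"
    proof -
      have "sqrt (real CARD('n)) ^ 2 < \<gamma>^2" using nsq by (intro power_strict_mono) auto
      then show ?thesis by simp
    qed
    obtain \<theta> where th: "0 < \<theta>" "\<theta> < 1" "(\<theta> + (1 - \<theta>) * \<gamma>^2) * \<theta> ^ (CARD('n) - 1) > 1"
      using theta_ineq[OF gsq] by auto
    obtain i0 :: 'n where True by blast
    have ng: "norm ((1 / \<gamma>) *\<^sub>R g) = 1" using g0 unfolding \<gamma>_def by simp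
    obtain R where R: "orthogonal_matrix R" "R *v axis i0 1 = (1 / \<gamma>) *\<^sub>R g"
      using orthogonal_matrix_exists_basis[OF ng] by metis
    have Ri0: "(transpose R *v y) $ i0 = inner y g / \<gamma>" for y
    proof -
      have "(transpose R *v y) $ i0 = inner (transpose R *v y) (axis i0 1)" by (simp add: inner_axis)
      also have "\<dots> = inner y (R *v axis i0 1)" by (rule dot_transpose)
      finally show ?thesis using R(2) by (simp add: inner_commute)
    qed
    define d1 where "d1 = sqrt (\<theta> + (1 - \<theta>) * \<gamma>^2)"
    define d2 where "d2 = sqrt \<theta>"
    define D :: "real^'n^'n" where "D = (\<chi> i j. if i = j then (if i = i0 then d1 else d2) else 0)"
    define M' where "M' = D ** transpose R ** M0"
    have M'S: "M' \<in> S" unfolding S_def mem_Collect_eq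
    proof (intro ballI)
      fix x assume x: "x \<in> K"
      define v where "v = transpose R *v (M0 *v x)"
      have M'x: "M' *v x = D *v v" unfolding M'_def v_def by (simp add: matrix_vector_mul_assoc matrix_mul_assoc)
      have nv: "norm v \<le> 1" unfolding v_def orth_norm[OF R(1)] using x M0(1) unfolding S_def by auto
      have vi0: "\<gamma> * v $ i0 = inner h x" unfolding v_def Ri0 using g0 gM[of x] by (simp add: inner_commute)
      have "\<bar>\<gamma> * v $ i0\<bar> < 1" using vi0 hK[OF x] by simp
      then have vi0': "(\<gamma> * v $ i0)^2 \<le> 1" by (simp add: abs_square_le_1 less_imp_le)
      have d1s: "d1^2 = \<theta> + (1 - \<theta>) * \<gamma>^2" unfolding d1_def using th g0
        by (intro real_sqrt_pow2) (simp add: mult_nonneg_nonneg)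
      have d2s: "d2^2 = \<theta>" unfolding d2_def using th by simp
      have "norm (D *v v) ^ 2 = d2^2 * norm v ^ 2 + (d1^2 - d2^2) * (v$i0)^2"
        unfolding D_def by (rule diag_norm2)
      also have "\<dots> = \<theta> * norm v ^ 2 + (1 - \<theta>) * (\<gamma> * v $ i0)^2"
        unfolding d1s d2s by (simp add: power_mult_distrib)
      also have "\<dots> \<le> \<theta> * 1 + (1 - \<theta>) * 1"
      proof (intro add_mono mult_left_mono)
        show "norm v ^ 2 \<le> 1" using nv by (simp add: power_le_one)
      qed (use th vi0' in auto)
      finally have "norm (D *v v) ^ 2 \<le> 1" by simp
      then show "norm (M' *v x) \<le> 1" unfolding M'x by (simp add: power_le_one_iff abs_square_le_1)
    qed
    have dM': "\<bar>det M'\<bar> = \<bar>d1 * d2 ^ (CARD('n) - 1)\<bar> * \<bar>det M0\<bar>"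
    proof -
      have "det M' = det D * det (transpose R) * det M0" unfolding M'_def by (simp add: det_mul)
      moreover have "\<bar>det (transpose R)\<bar> = 1" using det_orthogonal_matrix[OF R(1)] by auto
      moreover have "det D = d1 * d2 ^ (CARD('n) - 1)" unfolding D_def by (rule diag_det)
      ultimately show ?thesis by (simp add: abs_mult)
    qed
    have q1: "d1 * d2 ^ (CARD('n) - 1) > 1"
    proof -
      have pos: "d1 * d2 ^ (CARD('n) - 1) \<ge> 0" unfolding d1_def d2_def using th by simp
      have "(d1 * d2 ^ (CARD('n) - 1))^2 = (\<theta> + (1 - \<theta>) * \<gamma>^2) * \<theta> ^ (CARD('n) - 1)"
        unfolding d1_def d2_def using th
        by (simp add: power_mult_distrib real_sqrt_pow2 power_mult[symmetric] mult.commute[of _ 2] power_mult)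
      then have "(d1 * d2 ^ (CARD('n) - 1))^2 > 1^2" using th by simp
      then show ?thesis using pos power_less_imp_less_base by fastforce
    qed
    have "1 * \<bar>det M0\<bar> < \<bar>d1 * d2 ^ (CARD('n) - 1)\<bar> * \<bar>det M0\<bar>"
      using q1 detM0 by (intro mult_strict_right_mono) auto
    then have "\<bar>det M'\<bar> > \<bar>det M0\<bar>" unfolding dM' by simp
    then show False using M0(2)[OF M'S] by simp
  qed
  have "\<forall>x\<in>K. norm (M0 *v x) \<le> 1" using M0(1) unfolding S_def by simp
  then have "invertible M0 \<and> (\<forall>x\<in>K. norm (M0 *v x) \<le> 1) \<and>
           (\<forall>z. sqrt (real CARD('n)) * norm (M0 *v z) \<le> 1 \<longrightarrow> z \<in> K)"
    using invM0 claim by blast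
  then show ?thesis by blast
qed

lemma msp_cong: "(\<And>i. i < k \<Longrightarrow> f i = g i) \<Longrightarrow> mat_seq_prod A f k = mat_seq_prod A g k"
  by (induction k) auto

lemma mv_neg: "T *v (-x) = -(T *v (x::real^'n))"
  by (simp add: matrix_vector_mult_def vec_eq_iff sum_negf)

lemma main_r:
  fixes A :: "nat \<Rightarrow> real^'n^'n"
    and x :: "nat \<Rightarrow> real^'n"
    and J :: "nat \<Rightarrow> nat \<Rightarrow> nat"
    and m l N :: nat
  assumes m: "m > 0" and l: "l > 0"
    and J: "\<forall>i\<in>{1..N}. \<forall>t<l. J i t \<in> {1..m}"
    and r: "jsr A m < r"
  shows "opt_value A l N x J \<le> root (2*l) (real CARD('n)) * r"
proof -
  obtain B where B: "B > 0" "\<And>k js. (\<forall>i<k. js i \<in> {1..m}) \<Longrightarrow> mat_opnorm (mat_seq_prod A js k) \<le> B * r ^ k"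
    using jsr_bound(1)[OF m r] by blast
  have r0: "r > 0" using jsr_bound(2)[OF m r] .
  define V :: "(nat \<times> (nat \<Rightarrow> nat)) set" where "V = {(k, js). \<forall>i<k. js i \<in> {1..m}}"
  define K where "K = {z :: real^'n. \<forall>k js. (\<forall>i<k. js i \<in> {1..m}) \<longrightarrow> norm (mat_seq_prod A js k *v z) \<le> r ^ k}"
  have K_eq: "K = (\<Inter>p\<in>V. {z. norm (mat_seq_prod A (snd p) (fst p) *v z) \<le> r ^ fst p})"
    unfolding K_def V_def by auto
  have clK: "closed K" unfolding K_eq
    by (intro closed_INT ballI, unfold matrix_vector_mult_def, intro closed_Collect_le continuous_intros)
  have cK: "convex K" unfolding convex_def
  proof (intro ballI allI impI)
    fix y z :: "real^'n" and u v :: real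
    assume yz: "y \<in> K" "z \<in> K" and uv: "0 \<le> u" "0 \<le> v" "u + v = 1"
    show "u *\<^sub>R y + v *\<^sub>R z \<in> K" unfolding K_def mem_Collect_eq
    proof (intro allI impI)
      fix k and js :: "nat \<Rightarrow> nat" assume js: "\<forall>i<k. js i \<in> {1..m}"
      let ?T = "mat_seq_prod A js k"
      have "norm (?T *v (u *\<^sub>R y + v *\<^sub>R z)) = norm (u *\<^sub>R (?T *v y) + v *\<^sub>R (?T *v z))"
        by (simp add: matrix_vector_right_distrib matrix_vector_mult_scaleR)
      also have "\<dots> \<le> u * norm (?T *v y) + v * norm (?T *v z)"
        using uv by (metis (no_types) abs_of_nonneg norm_scaleR norm_triangle_ineq)
      also have "\<dots> \<le> u * r ^ k + v * r ^ k"
        using yz js uv unfolding K_def by (intro add_mono mult_left_mono) auto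
      also have "\<dots> = (u + v) * r ^ k" by (simp add: distrib_right)
      also have "\<dots> = r ^ k" using uv by simp
      finally show "norm (?T *v (u *\<^sub>R y + v *\<^sub>R z)) \<le> r ^ k" .
    qed
  qed
  have symK: "- z \<in> K" if "z \<in> K" for z using that unfolding K_def by (simp add: mv_neg)
  have ballK: "cball 0 (1 / B) \<subseteq> K"
  proof
    fix z :: "real^'n" assume "z \<in> cball 0 (1 / B)"
    then have z: "norm z \<le> 1 / B" by simp
    show "z \<in> K" unfolding K_def mem_Collect_eq
    proof (intro allI impI)
      fix k and js :: "nat \<Rightarrow> nat" assume js: "\<forall>i<k. js i \<in> {1..m}"
      have "norm (mat_seq_prod A js k *v z) \<le> mat_opnorm (mat_seq_prod A js k) * norm z" by (rule opn_bound)
      also have "\<dots> \<le> (B * r ^ k) * (1 / B)"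
        using B(2)[OF js] z B(1) r0 by (intro mult_mono) (auto simp: mat_opnorm_def onorm_pos_le)
      also have "\<dots> = r ^ k" using B(1) by simp
      finally show "norm (mat_seq_prod A js k *v z) \<le> r ^ k" .
    qed
  qed
  have Kb: "norm z \<le> 1" if "z \<in> K" for z
    using that unfolding K_def by (auto dest: spec[of _ 0])
  have inv: "(1 / r ^ l) *\<^sub>R (mat_seq_prod A w l *v z) \<in> K"
    if z: "z \<in> K" and w: "\<forall>t<l. w t \<in> {1..m}" for z w
    unfolding K_def mem_Collect_eq
  proof (intro allI impI)
    fix k and js :: "nat \<Rightarrow> nat" assume js: "\<forall>i<k. js i \<in> {1..m}"
    define js' where "js' = (\<lambda>i. if i < l then w i else js (i - l))"
    have v': "\<forall>i<l + k. js' i \<in> {1..m}" unfolding js'_def using w js by auto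
    have e1: "(\<lambda>i. js' (i + l)) = js" unfolding js'_def by auto
    have e2: "mat_seq_prod A js' l = mat_seq_prod A w l" by (rule msp_cong) (simp add: js'_def)
    have "mat_seq_prod A js k *v ((1 / r ^ l) *\<^sub>R (mat_seq_prod A w l *v z))
          = (1 / r ^ l) *\<^sub>R (mat_seq_prod A js' (l + k) *v z)"
      unfolding msp_split e1 e2 by (simp add: matrix_vector_mult_scaleR matrix_vector_mul_assoc)
    moreover have "norm (mat_seq_prod A js' (l + k) *v z) \<le> r ^ (l + k)"
      using z v' unfolding K_def by blast
    ultimately show "norm (mat_seq_prod A js k *v ((1 / r ^ l) *\<^sub>R (mat_seq_prod A w l *v z))) \<le> r ^ k"
      using r0 by (simp add: power_add field_simps)
  qed
  obtain M :: "real^'n^'n" where M: "invertible M" "\<And>z. z \<in> K \<Longrightarrow> norm (M *v z) \<le> 1"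
    "\<And>z. sqrt (real CARD('n)) * norm (M *v z) \<le> 1 \<Longrightarrow> z \<in> K"
    using loewner[OF cK clK symK _ ballK Kb] B(1) by auto
  have injM: "M *v z = 0 \<Longrightarrow> z = 0" for z
    using inj_matrix_vector_mult[OF M(1)] by (metis injD matrix_vector_mult_0_right)
  let ?n = "real CARD('n)"
  have sn: "sqrt ?n > 0" by simp
  have key: "norm (M *v (mat_seq_prod A w l *v z)) \<le> sqrt ?n * r ^ l * norm (M *v z)"
    if w: "\<forall>t<l. w t \<in> {1..m}" for w z
  proof (cases "M *v z = 0")
    case True
    then have "z = 0" using injM by blast
    then show ?thesis by simp
  next
    case False
    define s where "s = sqrt ?n * norm (M *v z)"
    have s0: "s > 0" unfolding s_def using False sn by simp
    define z' where "z' = (1 / s) *\<^sub>R z"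
    have "sqrt ?n * norm (M *v z') = 1" unfolding z'_def s_def using False
      by (simp add: matrix_vector_mult_scaleR)
    then have "z' \<in> K" using M(3) by simp
    then have "(1 / r ^ l) *\<^sub>R (mat_seq_prod A w l *v z') \<in> K" using inv w by blast
    then have "norm (M *v ((1 / r ^ l) *\<^sub>R (mat_seq_prod A w l *v z'))) \<le> 1" by (rule M(2))
    moreover have "M *v ((1 / r ^ l) *\<^sub>R (mat_seq_prod A w l *v z')) = (1 / (r ^ l * s)) *\<^sub>R (M *v (mat_seq_prod A w l *v z))"
      unfolding z'_def by (simp add: matrix_vector_mult_scaleR)
    ultimately have "norm (M *v (mat_seq_prod A w l *v z)) / (r ^ l * s) \<le> 1"
      using r0 s0 by simp
    then show ?thesis using r0 s0 unfolding s_def by (simp add: field_simps)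
  qed
  define P where "P = transpose M ** M"
  have quad: "v \<bullet> (P *v v) = norm (M *v v) ^ 2" for v
  proof -
    have "v \<bullet> (P *v v) = (transpose M *v (M *v v)) \<bullet> v"
      unfolding P_def by (simp add: matrix_vector_mul_assoc inner_commute)
    also have "\<dots> = (M *v v) \<bullet> (M *v v)" by (rule dot_transpose)
    finally show ?thesis by (simp add: power2_norm_eq_inner)
  qed
  define \<gamma> where "\<gamma> = root (2*l) ?n * r"
  have g0: "\<gamma> \<ge> 0" unfolding \<gamma>_def using r0 by (intro mult_nonneg_nonneg real_root_ge_zero) auto
  have gpow: "\<gamma> ^ (2*l) = ?n * (r ^ l)^2"
  proof -
    have "\<gamma> ^ (2*l) = root (2*l) ?n ^ (2*l) * r ^ (2*l)" unfolding \<gamma>_def by (rule power_mult_distrib)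
    also have "root (2*l) ?n ^ (2*l) = ?n" using l by (intro real_root_pow_pos2) auto
    also have "r ^ (2*l) = (r ^ l)^2" by (simp add: power_mult[symmetric] mult.commute)
    finally show ?thesis .
  qed
  have feas: "feasible A l N x J \<gamma> P"
    unfolding feasible_def Let_def
  proof (intro conjI ballI)
    show "0 \<le> \<gamma>" by (rule g0)
    show "pos_def_mat P" unfolding pos_def_mat_def sym_mat_def
    proof (intro conjI allI impI)
      show "transpose P = P" unfolding P_def by (simp add: matrix_transpose_mul)
      fix v :: "real^'n" assume "v \<noteq> 0"
      then have "M *v v \<noteq> 0" using injM by blast
      then show "v \<bullet> (P *v v) > 0" unfolding quad by simp
    qed
    fix i assume i: "i \<in> {1..N}"
    let ?y = "mat_seq_prod A (J i) l *v x i"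
    have "norm (M *v ?y) \<le> sqrt ?n * r ^ l * norm (M *v x i)" using key J i by blast
    then have "norm (M *v ?y)^2 \<le> (sqrt ?n * r ^ l * norm (M *v x i))^2"
      by (intro power_mono) auto
    also have "\<dots> = \<gamma> ^ (2*l) * norm (M *v x i)^2" unfolding gpow by (simp add: power_mult_distrib)
    finally show "?y \<bullet> (P *v ?y) \<le> \<gamma> ^ (2*l) * (x i \<bullet> (P *v x i))" unfolding quad .
  qed
  show ?thesis unfolding opt_value_def \<gamma>_def[symmetric]
  proof (rule cInf_lower)
    show "\<gamma> \<in> {\<gamma>. \<exists>P. feasible A l N x J \<gamma> P}" using feas by blast
    show "bdd_below {\<gamma>. \<exists>P. feasible A l N x J \<gamma> P}"
      by (rule bdd_belowI[of _ 0]) (auto simp: feasible_def)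
  qed
qed


theorem theorem3:
  fixes A :: "nat \<Rightarrow> real^'n^'n"
    and x :: "nat \<Rightarrow> real^'n"
    and J :: "nat \<Rightarrow> nat \<Rightarrow> nat"
    and m l N :: nat
  assumes "m > 0" and "l > 0" and "N > 0"
    and "\<forall>i\<in>{1..N}. norm (x i) = 1"
    and "\<forall>i\<in>{1..N}. \<forall>t<l. J i t \<in> {1..m}"
  shows "jsr A m \<ge> opt_value A l N x J / root (2*l) (real CARD('n))"
proof -
  have c0: "root (2*l) (real CARD('n)) > 0" using assms(2) by simp
  have "opt_value A l N x J / root (2*l) (real CARD('n)) \<le> jsr A m"
  proof (rule dense_ge)
    fix r assume "jsr A m < r"
    then have "opt_value A l N x J \<le> root (2*l) (real CARD('n)) * r"
      by (rule main_r[OF assms(1,2,5)])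
    then show "opt_value A l N x J / root (2*l) (real CARD('n)) \<le> r"
      using c0 by (simp add: field_simps)
  qed
  then show ?thesis by simp
qed

end
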